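(* In the Euclidean plane $\mathbb R^2$, let $\mu\neq 0$ and let $\gamma$ be a critical curve of $\mathbf{\Theta}_\mu$ whose first-integral constant $d$ (defined by $\mu^4\kappa_s^2=d\,e^{-2\mu\kappa}-(\mu\kappa-1)^2$) is positive. Then for every $\lambda>0$, the dilation $\widetilde\gamma(s)=\lambda\gamma(s/\lambda)$ is a critical curve of $\mathbf{\Theta}_{\lambda\mu}$ whose first-integral constant is positive (indeed equal to $d$).
   Context: A critical curve of $\mathbf{\Theta}_\mu=\int_\gamma e^{\mu\kappa}ds$ in $\mathbb R^2$ is an arc-length parametrized curve whose signed curvature satisfies $\frac{d^2}{ds^2}(e^{\mu\kappa})+(\kappa^2-\kappa/\mu)e^{\mu\kappa}=0$. *)

theory Defs
  imports "HOL-Analysis.Analysis"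
begin

definition tangent :: "(real \<Rightarrow> real^2) \<Rightarrow> real \<Rightarrow> real^2" where
  "tangent \<gamma> s = vector_derivative \<gamma> (at s)"

definition accel :: "(real \<Rightarrow> real^2) \<Rightarrow> real \<Rightarrow> real^2" where
  "accel \<gamma> s = vector_derivative (tangent \<gamma>) (at s)"

text \<open>Signed curvature of an arc-length parametrized curve: kappa = det(gamma', gamma'').\<close>
definition signed_curvature :: "(real \<Rightarrow> real^2) \<Rightarrow> real \<Rightarrow> real" where
  "signed_curvature \<gamma> s =
     tangent \<gamma> s $ 1 * accel \<gamma> s $ 2 - tangent \<gamma> s $ 2 * accel \<gamma> s $ 1"

definition arc_length_curve :: "real set \<Rightarrow> (real \<Rightarrow> real^2) \<Rightarrow> bool" where
  "arc_length_curve I \<gamma> \<longleftrightarrow> open I \<and>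
     (\<forall>s\<in>I. \<gamma> differentiable (at s) \<and> tangent \<gamma> differentiable (at s)
            \<and> norm (tangent \<gamma> s) = 1)"

definition critical_curve :: "real \<Rightarrow> real set \<Rightarrow> (real \<Rightarrow> real^2) \<Rightarrow> bool" where
  "critical_curve \<mu> I \<gamma> \<longleftrightarrow> arc_length_curve I \<gamma> \<and>
     (\<exists>f' f''. \<forall>s\<in>I.
        ((\<lambda>t. exp (\<mu> * signed_curvature \<gamma> t)) has_real_derivative f' s) (at s) \<and>
        (f' has_real_derivative f'' s) (at s) \<and>
        f'' s + ((signed_curvature \<gamma> s)\<^sup>2 - signed_curvature \<gamma> s / \<mu>)
                 * exp (\<mu> * signed_curvature \<gamma> s) = 0)"

definition first_integral_const :: "real \<Rightarrow> real set \<Rightarrow> (real \<Rightarrow> real^2) \<Rightarrow> real \<Rightarrow> bool" where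
  "first_integral_const \<mu> I \<gamma> d \<longleftrightarrow>
     (\<forall>s\<in>I. \<mu>^4 * (deriv (signed_curvature \<gamma>) s)\<^sup>2
              = d * exp (-2 * \<mu> * signed_curvature \<gamma> s) - (\<mu> * signed_curvature \<gamma> s - 1)\<^sup>2)"

definition dilation :: "real \<Rightarrow> (real \<Rightarrow> real^2) \<Rightarrow> real \<Rightarrow> real^2" where
  "dilation c \<gamma> s = c *\<^sub>R \<gamma> (s / c)"

end

theory Submission imports Defs begin

lemma dil_vd:
  fixes g :: "real \<Rightarrow> 'a::real_normed_vector"
  assumes "(g has_vector_derivative v) (at (t/c))"
  shows "((\<lambda>s. a *\<^sub>R g (s/c)) has_vector_derivative ((a/c) *\<^sub>R v)) (at t)"
proof -
  have h: "((\<lambda>s. s/c) has_vector_derivative (1/c)) (at t)"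
    using has_real_derivative_iff_has_vector_derivative[THEN iffD1, OF DERIV_cdivide[OF DERIV_ident]]
    by (metis divide_inverse mult_1)
  have "((g \<circ> (\<lambda>s. s/c)) has_vector_derivative ((1/c) *\<^sub>R v)) (at t)"
    by (rule vector_diff_chain_at[OF h]) (simp add: assms)
  from bounded_linear.has_vector_derivative[OF bounded_linear_scaleR_right this, of a]
  show ?thesis by (simp add: o_def)
qed

lemma dil_rd:
  assumes "(g has_real_derivative v) (at (t/c))"
  shows "((\<lambda>s. g (s/c)) has_real_derivative (v/c)) (at t)"
proof -
  have h: "((\<lambda>s. s/c) has_real_derivative (1/c)) (at t)"
    using DERIV_cdivide[OF DERIV_ident, of c t] by simp
  show ?thesis using DERIV_chain2[where f=g and g="\<lambda>s. s/c", OF _ h] assms by simp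
qed


theorem proposition4p1:
  fixes \<mu> d c :: real and I :: "real set" and \<gamma> :: "real \<Rightarrow> real^2"
  assumes "\<mu> \<noteq> 0"
    and "critical_curve \<mu> I \<gamma>"
    and "first_integral_const \<mu> I \<gamma> d"
    and "d > 0"
    and "c > 0"
  shows "critical_curve (c * \<mu>) ((\<lambda>s. c * s) ` I) (dilation c \<gamma>)
         \<and> first_integral_const (c * \<mu>) ((\<lambda>s. c * s) ` I) (dilation c \<gamma>) d"
proof -
  define J where "J = (\<lambda>s. c * s) ` I"
  define g where "g = dilation c \<gamma>"
  have c0: "c \<noteq> 0" using assms(5) by simp
  have arc: "arc_length_curve I \<gamma>" using assms(2) by (simp add: critical_curve_def)
  have oI: "open I" using arc by (simp add: arc_length_curve_def)
  have gd: "\<And>s. s \<in> I \<Longrightarrow> \<gamma> differentiable (at s)" 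
    and td: "\<And>s. s \<in> I \<Longrightarrow> tangent \<gamma> differentiable (at s)"
    and tn: "\<And>s. s \<in> I \<Longrightarrow> norm (tangent \<gamma> s) = 1"
    using arc by (auto simp: arc_length_curve_def)
  have memJ: "t \<in> J \<longleftrightarrow> t / c \<in> I" for t
  proof
    assume "t \<in> J" then show "t / c \<in> I" using c0 by (auto simp: J_def)
  next
    assume "t / c \<in> I" then have "c * (t/c) \<in> J" unfolding J_def by blast
    then show "t \<in> J" using c0 by simp
  qed
  have oJ: "open J"
  proof -
    have "J = (\<lambda>x. c *\<^sub>R x) ` I" by (simp add: J_def)
    then show ?thesis using open_scaling[OF c0 oI] by simp
  qed
  have gdef: "g = (\<lambda>s. c *\<^sub>R \<gamma> (s/c))" by (simp add: g_def dilation_def fun_eq_iff)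
  have Tv: "(g has_vector_derivative tangent \<gamma> (t/c)) (at t)" if "t \<in> J" for t
  proof -
    have "(\<gamma> has_vector_derivative tangent \<gamma> (t/c)) (at (t/c))"
      using gd[of "t/c"] that memJ by (simp add: tangent_def vector_derivative_works[symmetric])
    from dil_vd[OF this, of c] show ?thesis using c0 by (simp add: gdef)
  qed
  have T: "tangent g t = tangent \<gamma> (t/c)" if "t \<in> J" for t
    using Tv[OF that] by (simp add: tangent_def vector_derivative_at)
  have Av: "(tangent g has_vector_derivative (1/c) *\<^sub>R accel \<gamma> (t/c)) (at t)" if "t \<in> J" for t
  proof -
    have "(tangent \<gamma> has_vector_derivative accel \<gamma> (t/c)) (at (t/c))"
      using td[of "t/c"] that memJ by (simp add: accel_def vector_derivative_works[symmetric])
    from dil_vd[OF this, of 1] have "((\<lambda>s. tangent \<gamma> (s/c)) has_vector_derivative (1/c) *\<^sub>R accel \<gamma> (t/c)) (at t)"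
      by simp
    then show ?thesis
      by (rule has_vector_derivative_transform_within_open[OF _ oJ that]) (simp add: T)
  qed
  have A: "accel g t = (1/c) *\<^sub>R accel \<gamma> (t/c)" if "t \<in> J" for t
    using Av[OF that] by (simp add: accel_def vector_derivative_at)
  have K: "signed_curvature g t = signed_curvature \<gamma> (t/c) / c" if "t \<in> J" for t
    using T[OF that] A[OF that] by (simp add: signed_curvature_def diff_divide_distrib)
  have KK: "c * \<mu> * signed_curvature g t = \<mu> * signed_curvature \<gamma> (t/c)" if "t \<in> J" for t
    using K[OF that] c0 by simp
  from assms(2) obtain f' f'' where ff: "\<And>s. s \<in> I \<Longrightarrow>
        ((\<lambda>t. exp (\<mu> * signed_curvature \<gamma> t)) has_real_derivative f' s) (at s) \<and>
        (f' has_real_derivative f'' s) (at s) \<and>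
        f'' s + ((signed_curvature \<gamma> s)\<^sup>2 - signed_curvature \<gamma> s / \<mu>)
                 * exp (\<mu> * signed_curvature \<gamma> s) = 0"
    unfolding critical_curve_def by blast
  have arcJ: "arc_length_curve J g"
    unfolding arc_length_curve_def
  proof (intro conjI ballI oJ)
    fix s assume s: "s \<in> J"
    show "g differentiable (at s)" using Tv[OF s] by (rule differentiableI_vector)
    show "tangent g differentiable (at s)" using Av[OF s] by (rule differentiableI_vector)
    show "norm (tangent g s) = 1" using T[OF s] tn[of "s/c"] s memJ by simp
  qed
  have crit: "critical_curve (c * \<mu>) J g"
    unfolding critical_curve_def
  proof (intro conjI arcJ exI ballI)
    fix s assume s: "s \<in> J"
    have sI: "s/c \<in> I" using s memJ by simp
    have d1: "((\<lambda>t. exp (\<mu> * signed_curvature \<gamma> (t/c))) has_real_derivative f' (s/c) / c) (at s)"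
      using dil_rd[where g="\<lambda>t. exp (\<mu> * signed_curvature \<gamma> t)"] ff[OF sI] by blast
    show "((\<lambda>t. exp (c * \<mu> * signed_curvature g t)) has_real_derivative f' (s/c) / c) (at s)"
      by (rule has_field_derivative_transform_within_open[OF d1 oJ s]) (simp add: KK)
    have "((\<lambda>t. f' (t/c)) has_real_derivative f'' (s/c) / c) (at s)"
      using dil_rd[where g=f'] ff[OF sI] by blast
    from DERIV_cdivide[OF this, of c]
    show "((\<lambda>t. f' (t/c) / c) has_real_derivative f'' (s/c) / c^2) (at s)"
      by (simp add: power2_eq_square)
    have e: "f'' (s/c) + ((signed_curvature \<gamma> (s/c))\<^sup>2 - signed_curvature \<gamma> (s/c) / \<mu>)
                 * exp (\<mu> * signed_curvature \<gamma> (s/c)) = 0" using ff[OF sI] by blast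
    have "f'' (s/c) / c^2 + ((signed_curvature g s)\<^sup>2 - signed_curvature g s / (c * \<mu>))
                 * exp (c * \<mu> * signed_curvature g s)
         = (f'' (s/c) + ((signed_curvature \<gamma> (s/c))\<^sup>2 - signed_curvature \<gamma> (s/c) / \<mu>)
                 * exp (\<mu> * signed_curvature \<gamma> (s/c))) / c^2"
      unfolding KK[OF s] K[OF s] using c0 assms(1) by (simp add: field_simps power2_eq_square)
    then show "f'' (s/c) / c^2 + ((signed_curvature g s)\<^sup>2 - signed_curvature g s / (c * \<mu>))
                 * exp (c * \<mu> * signed_curvature g s) = 0" using e by simp
  qed
  define k' where "k' x = f' x / (exp (\<mu> * signed_curvature \<gamma> x) * \<mu>)" for x
  have kd: "(signed_curvature \<gamma> has_real_derivative k' x) (at x)" if x: "x \<in> I" for x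
  proof -
    have "((\<lambda>t. ln (exp (\<mu> * signed_curvature \<gamma> t)) / \<mu>) has_real_derivative
            (f' x / exp (\<mu> * signed_curvature \<gamma> x)) / \<mu>) (at x)"
    proof -
      have h1: "((\<lambda>t. exp (\<mu> * signed_curvature \<gamma> t)) has_real_derivative f' x) (at x)"
        using ff[OF x] by blast
      have "((\<lambda>t. ln (exp (\<mu> * signed_curvature \<gamma> t))) has_real_derivative
            1 / exp (\<mu> * signed_curvature \<gamma> x) * f' x) (at x)"
        using DERIV_chain2[OF DERIV_ln_divide h1] by simp
      from DERIV_cdivide[OF this, of \<mu>] show ?thesis by simp
    qed
    then show ?thesis using assms(1) by (simp add: k'_def)
  qed
  have fi: "first_integral_const (c * \<mu>) J g d"
    unfolding first_integral_const_def
  proof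
    fix s assume s: "s \<in> J"
    have sI: "s/c \<in> I" using s memJ by simp
    have "((\<lambda>t. signed_curvature \<gamma> (t/c)) has_real_derivative k' (s/c) / c) (at s)"
      using dil_rd[OF kd[OF sI]] .
    from DERIV_cdivide[OF this, of c]
    have "((\<lambda>t. signed_curvature \<gamma> (t/c) / c) has_real_derivative k' (s/c) / c / c) (at s)" .
    then have "(signed_curvature g has_real_derivative k' (s/c) / c / c) (at s)"
      by (rule has_field_derivative_transform_within_open[OF _ oJ s]) (simp add: K)
    then have dg: "deriv (signed_curvature g) s = k' (s/c) / c / c" by (rule DERIV_imp_deriv)
    have dk: "deriv (signed_curvature \<gamma>) (s/c) = k' (s/c)" by (rule DERIV_imp_deriv[OF kd[OF sI]])
    have e: "\<mu>^4 * (deriv (signed_curvature \<gamma>) (s/c))\<^sup>2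
              = d * exp (-2 * \<mu> * signed_curvature \<gamma> (s/c)) - (\<mu> * signed_curvature \<gamma> (s/c) - 1)\<^sup>2"
      using assms(3) sI by (simp add: first_integral_const_def)
    have a1: "(c * \<mu>)^4 * (deriv (signed_curvature g) s)\<^sup>2 = \<mu>^4 * (deriv (signed_curvature \<gamma>) (s/c))\<^sup>2"
      using c0 by (simp add: dg dk field_simps power2_eq_square numeral_eq_Suc)
    have a2: "-2 * (c * \<mu>) * signed_curvature g s = -2 * \<mu> * signed_curvature \<gamma> (s/c)"
      using KK[OF s] by simp
    have a3: "d * exp (-2 * (c * \<mu>) * signed_curvature g s) - (c * \<mu> * signed_curvature g s - 1)\<^sup>2
       = d * exp (-2 * \<mu> * signed_curvature \<gamma> (s/c)) - (\<mu> * signed_curvature \<gamma> (s/c) - 1)\<^sup>2"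
      by (simp only: a2 KK[OF s])
    show "(c * \<mu>)^4 * (deriv (signed_curvature g) s)\<^sup>2
              = d * exp (-2 * (c * \<mu>) * signed_curvature g s) - (c * \<mu> * signed_curvature g s - 1)\<^sup>2"
      unfolding a1 a3 by (rule e)
  qed
  show ?thesis using crit fi by (simp add: J_def g_def)
qed

end
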